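(* Let $q$ be a conjunctive query and $q'$ a subquery of $q$ (a subset of its atoms); for a database $i$ for $q$, let $i'$ be its restriction to the relations of $q'$. Let $B$ be any map that assigns to each matching database $i'$ a set $B(i')\subseteq q'(i')$, and assume $\mathbf E[|B(I')|]\le\gamma\,\mathbf E[|q'(I')|]$. Then $\mathbf E[|q(I)\ltimes B(I')|]\le\gamma\,\mathbf E[|q(I)|]$, where $I$ is a uniformly chosen matching database and $I'$ its restriction.
   Context: Conjunctive queries are full and self-join-free; $q(i)$ is the set of assignments to the variables of $q$ satisfying all atoms on database $i$. Matching database over $[n]$: each relation has exactly $n$ tuples and each column contains each value of $[n]$ exactly once; uniformly chosen means each relation independently uniform among such. For $A\subseteq q(i)$ and $B\subseteq q'(i')$ with $\mathrm{atoms}(q')\subseteq\mathrm{atoms}(q)$, the semijoin $A\ltimes B$ is the set of tuples of $A$ whose projection onto the variables of $q'$ lies in $B$. *)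

theory Defs
  imports "HOL-Probability.Probability"
begin

text \<open>A conjunctive query is a finite set of atoms; an atom is a pair of a relation
  name and the list of variables in its columns. Full: every variable is an output variable,
  so answers are assignments to all variables.\<close>

type_synonym ('r, 'v) cq = "('r \<times> 'v list) set"
type_synonym 'r db = "'r \<Rightarrow> nat list set"

definition self_join_free :: "('r, 'v) cq \<Rightarrow> bool" where
  "self_join_free q \<longleftrightarrow> (\<forall>a\<in>q. \<forall>b\<in>q. fst a = fst b \<longrightarrow> a = b)"

definition cq_vars :: "('r, 'v) cq \<Rightarrow> 'v set" where
  "cq_vars q = (\<Union>(R, xs)\<in>q. set xs)"

definition cq_rels :: "('r, 'v) cq \<Rightarrow> 'r set" where
  "cq_rels q = fst ` q"

definition answers :: "('r, 'v) cq \<Rightarrow> 'r db \<Rightarrow> ('v \<Rightarrow> nat) set" where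
  "answers q D = {\<alpha> \<in> cq_vars q \<rightarrow>\<^sub>E UNIV. \<forall>(R, xs)\<in>q. map \<alpha> xs \<in> D R}"

definition matching_rel :: "nat \<Rightarrow> nat \<Rightarrow> nat list set \<Rightarrow> bool" where
  "matching_rel n k T \<longleftrightarrow>
     (\<forall>t\<in>T. length t = k \<and> set t \<subseteq> {1..n}) \<and> finite T \<and> card T = n \<and>
     (\<forall>j<k. \<forall>v\<in>{1..n}. \<exists>!t. t \<in> T \<and> t ! j = v)"

definition matching_dbs :: "nat \<Rightarrow> ('r, 'v) cq \<Rightarrow> 'r db set" where
  "matching_dbs n q = {D. (\<forall>(R, xs)\<in>q. matching_rel n (length xs) (D R)) \<and>
                          (\<forall>R. R \<notin> cq_rels q \<longrightarrow> D R = {})}"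

definition restrict_db :: "'r db \<Rightarrow> ('r, 'v) cq \<Rightarrow> 'r db" where
  "restrict_db D q' = (\<lambda>R. if R \<in> cq_rels q' then D R else {})"

definition semijoin :: "('v \<Rightarrow> nat) set \<Rightarrow> 'v set \<Rightarrow> ('v \<Rightarrow> nat) set \<Rightarrow> ('v \<Rightarrow> nat) set" where
  "semijoin A V B = {\<alpha> \<in> A. restrict \<alpha> V \<in> B}"

end

theory Submission
  imports Defs
begin

definition sw :: "nat \<Rightarrow> nat \<Rightarrow> nat \<Rightarrow> nat" where
  "sw a b v = (if v = a then b else if v = b then a else v)"

lemma sw_invol[simp]: "sw a b (sw a b v) = v" by (auto simp: sw_def)
lemma sw_sym: "sw a b = sw b a" by (auto simp: sw_def fun_eq_iff)
lemma sw_range: "a \<in> S \<Longrightarrow> b \<in> S \<Longrightarrow> v \<in> S \<Longrightarrow> sw a b v \<in> S" by (auto simp: sw_def)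

definition psi :: "(nat \<Rightarrow> nat \<Rightarrow> nat) \<Rightarrow> nat list \<Rightarrow> nat list" where
  "psi h t = map (\<lambda>j. h j (t!j)) [0..<length t]"

lemma psi_length[simp]: "length (psi h t) = length t" by (simp add: psi_def)
lemma psi_nth[simp]: "j < length t \<Longrightarrow> psi h t ! j = h j (t ! j)" by (simp add: psi_def)

lemma psi_invol:
  assumes "\<And>j v. h j (h j v) = v" shows "psi h (psi h t) = t"
  by (rule nth_equalityI) (simp_all add: assms)

lemma psi_map: "psi (\<lambda>j. f (xs ! j)) (map \<gamma> xs) = map (\<lambda>x. f x (\<gamma> x)) xs"
  by (rule nth_equalityI) simp_all

lemma matching_rel_psi:
  assumes m: "matching_rel n k T" and inv: "\<And>j v. h j (h j v) = v"
    and rng: "\<And>j v. j < k \<Longrightarrow> v \<in> {1..n} \<Longrightarrow> h j v \<in> {1..n}"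
  shows "matching_rel n k (psi h ` T)"
proof -
  have inj: "inj_on (psi h) T"
    by (metis inj_onI psi_invol inv)
  have A: "\<forall>t\<in>psi h ` T. length t = k \<and> set t \<subseteq> {1..n}"
  proof
    fix t assume "t \<in> psi h ` T"
    then obtain u where u: "u \<in> T" "t = psi h u" by auto
    have lu: "length u = k" "set u \<subseteq> {1..n}" using m u(1) by (auto simp: matching_rel_def)
    have "set t \<subseteq> {1..n}"
    proof
      fix v assume "v \<in> set t"
      then obtain j where j: "j < length t" "t ! j = v" by (auto simp: in_set_conv_nth)
      have "u ! j \<in> {1..n}" using lu j u(2) nth_mem by fastforce
      then show "v \<in> {1..n}" using rng[of j "u!j"] j u(2) lu by simp
    qed
    then show "length t = k \<and> set t \<subseteq> {1..n}" using u lu by simp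
  qed
  have C: "\<forall>j<k. \<forall>v\<in>{1..n}. \<exists>!t. t \<in> psi h ` T \<and> t ! j = v"
  proof (intro allI impI ballI)
    fix j v assume j: "j < k" and v: "v \<in> {1..n}"
    have "h j v \<in> {1..n}" using rng j v by blast
    then obtain u where u: "u \<in> T" "u ! j = h j v" and uu: "\<And>u'. u' \<in> T \<Longrightarrow> u' ! j = h j v \<Longrightarrow> u' = u"
      using m j unfolding matching_rel_def by metis
    have lu: "length u = k" using m u(1) by (auto simp: matching_rel_def)
    show "\<exists>!t. t \<in> psi h ` T \<and> t ! j = v"
    proof (rule ex1I[of _ "psi h u"])
      show "psi h u \<in> psi h ` T \<and> psi h u ! j = v" using u lu j inv by simp
    next
      fix t assume t: "t \<in> psi h ` T \<and> t ! j = v"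
      then obtain u' where u': "u' \<in> T" "t = psi h u'" by auto
      have "length u' = k" using m u'(1) by (auto simp: matching_rel_def)
      then have "h j (u' ! j) = v" using t u' j by simp
      then have "u' ! j = h j v" using inv by metis
      then show "t = psi h u" using uu u' by simp
    qed
  qed
  show ?thesis using A C m inj card_image[OF inj] by (auto simp: matching_rel_def)
qed


lemma cq_vars_mono: "q' \<subseteq> q \<Longrightarrow> cq_vars q' \<subseteq> cq_vars q"
  by (auto simp: cq_vars_def)

lemma finite_cq_vars: "finite q \<Longrightarrow> finite (cq_vars q)"
  by (auto simp: cq_vars_def)

lemma in_cq_vars: "x \<in> cq_vars q \<longleftrightarrow> (\<exists>R xs. (R, xs) \<in> q \<and> x \<in> set xs)"
  by (auto simp: cq_vars_def)

lemma rel_tuple: "matching_rel n k T \<Longrightarrow> t \<in> T \<Longrightarrow> length t = k \<and> set t \<subseteq> {1..n}"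
  by (auto simp: matching_rel_def)

lemma db_tuple: "D \<in> matching_dbs n Q \<Longrightarrow> (R, xs) \<in> Q \<Longrightarrow> t \<in> D R \<Longrightarrow> length t = length xs \<and> set t \<subseteq> {1..n}"
  unfolding matching_dbs_def using rel_tuple by fastforce

lemma db_outside: "D \<in> matching_dbs n Q \<Longrightarrow> R \<notin> cq_rels Q \<Longrightarrow> D R = {}"
  unfolding matching_dbs_def by auto

lemma answers_range:
  assumes "D \<in> matching_dbs n Q" "\<alpha> \<in> answers Q D"
  shows "\<alpha> \<in> cq_vars Q \<rightarrow>\<^sub>E {1..n}"
proof -
  have "\<alpha> x \<in> {1..n}" if xv: "x \<in> cq_vars Q" for x
  proof -
    obtain R xs where R: "(R, xs) \<in> Q" "x \<in> set xs" using xv unfolding in_cq_vars by blast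
    have "map \<alpha> xs \<in> D R" using assms(2) R(1) by (auto simp: answers_def)
    then have "set (map \<alpha> xs) \<subseteq> {1..n}" using db_tuple[OF assms(1) R(1)] by blast
    then show ?thesis using R(2) by auto
  qed
  then show ?thesis using assms(2) by (auto simp: answers_def)
qed

lemma finite_answers:
  assumes "finite Q" "D \<in> matching_dbs n Q" shows "finite (answers Q D)"
  by (rule finite_subset[OF _ finite_PiE[OF finite_cq_vars[OF assms(1)], of "\<lambda>_. {1..n}"]])
     (use answers_range[OF assms(2)] in auto)

lemma finite_matching_dbs:
  assumes "finite Q" shows "finite (matching_dbs n Q)"
proof -
  define L where "L = Max (insert 0 (length ` snd ` Q))"
  define X where "X = {t. set t \<subseteq> {1..n} \<and> length t \<le> L}"
  have fX: "finite X" unfolding X_def by (rule finite_lists_length_le) simp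
  have fr: "finite (cq_rels Q)" using assms by (simp add: cq_rels_def)
  have sub: "D R \<subseteq> X" if "D \<in> matching_dbs n Q" for D R
  proof
    fix t assume t: "t \<in> D R"
    show "t \<in> X"
    proof (cases "R \<in> cq_rels Q")
      case True
      then obtain xs where xs: "(R, xs) \<in> Q" by (auto simp: cq_rels_def)
      have "length xs \<le> L" unfolding L_def using assms xs
        by (intro Max_ge) (auto simp: image_iff intro!: bexI[of _ "(R,xs)"])
      then show ?thesis using db_tuple[OF that xs t] by (auto simp: X_def)
    next
      case False then show ?thesis using db_outside[OF that False] t by auto
    qed
  qed
  have inj: "inj_on (\<lambda>D. restrict D (cq_rels Q)) (matching_dbs n Q)"
  proof (rule inj_onI)
    fix D1 D2 assume a: "D1 \<in> matching_dbs n Q" "D2 \<in> matching_dbs n Q"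
      "restrict D1 (cq_rels Q) = restrict D2 (cq_rels Q)"
    show "D1 = D2"
    proof
      fix R show "D1 R = D2 R"
        using a db_outside[OF a(1)] db_outside[OF a(2)] by (cases "R \<in> cq_rels Q") (metis restrict_apply')+
    qed
  qed
  have "(\<lambda>D. restrict D (cq_rels Q)) ` matching_dbs n Q \<subseteq> cq_rels Q \<rightarrow>\<^sub>E Pow X"
  proof (rule image_subsetI)
    fix D assume "D \<in> matching_dbs n Q"
    then show "restrict D (cq_rels Q) \<in> cq_rels Q \<rightarrow>\<^sub>E Pow X" using sub[of D] by auto
  qed
  then have "finite ((\<lambda>D. restrict D (cq_rels Q)) ` matching_dbs n Q)"
    by (rule finite_subset) (intro finite_PiE fr finite_Pow_iff[THEN iffD2] fX)
  then show ?thesis using finite_imageD inj by blast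
qed

lemma restrict_db_matching:
  assumes "D \<in> matching_dbs n q" "Q \<subseteq> q" shows "restrict_db D Q \<in> matching_dbs n Q"
proof -
  have "matching_rel n (length xs) (restrict_db D Q R)" if "(R, xs) \<in> Q" for R xs
  proof -
    have "R \<in> cq_rels Q" using that by (force simp: cq_rels_def)
    then have "restrict_db D Q R = D R" by (simp add: restrict_db_def)
    moreover have "(R, xs) \<in> q" using that assms(2) by blast
    ultimately show ?thesis using assms(1) unfolding matching_dbs_def by auto
  qed
  moreover have "restrict_db D Q R = {}" if "R \<notin> cq_rels Q" for R
    using that by (simp add: restrict_db_def)
  ultimately show ?thesis unfolding matching_dbs_def by blast
qed

lemma rel_not_in_sub:
  assumes "self_join_free q" "q' \<subseteq> q" "(R, xs) \<in> q - q'" shows "R \<notin> cq_rels q'"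
proof
  assume "R \<in> cq_rels q'"
  then obtain ys where "(R, ys) \<in> q'" by (auto simp: cq_rels_def)
  then have "(R, ys) = (R, xs)" using assms unfolding self_join_free_def
    by (metis DiffD1 fst_conv subsetD)
  then show False using assms(3) \<open>(R, ys) \<in> q'\<close> by simp
qed

lemma the_atom:
  assumes "self_join_free q" "(R, xs) \<in> q" shows "(THE ys. (R, ys) \<in> q) = xs"
proof (rule the_equality)
  show "(R, xs) \<in> q" by (rule assms(2))
next
  fix ys assume "(R, ys) \<in> q"
  then have "(R, ys) = (R, xs)" using assms unfolding self_join_free_def
    by (metis fst_conv)
  then show "ys = xs" by simp
qed

lemma cq_rels_split: "q' \<subseteq> q \<Longrightarrow> cq_rels q = cq_rels q' \<union> cq_rels (q - q')"
  by (auto simp: cq_rels_def)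

lemma split_bij:
  assumes sjf: "self_join_free q" and sub: "q' \<subseteq> q"
  shows "bij_betw (\<lambda>D. (restrict_db D q', restrict_db D (q - q'))) (matching_dbs n q)
           (matching_dbs n q' \<times> matching_dbs n (q - q'))"
proof (rule bij_betw_byWitness[where f' = "\<lambda>(D0, D2) R. if R \<in> cq_rels q' then D0 R else D2 R"])
  show "\<forall>D\<in>matching_dbs n q. (\<lambda>(D0, D2) R. if R \<in> cq_rels q' then D0 R else D2 R)
          (restrict_db D q', restrict_db D (q - q')) = D"
  proof
    fix D assume D: "D \<in> matching_dbs n q"
    show "(\<lambda>(D0, D2) R. if R \<in> cq_rels q' then D0 R else D2 R)
          (restrict_db D q', restrict_db D (q - q')) = D"
    proof
      fix R show "(\<lambda>(D0, D2) R. if R \<in> cq_rels q' then D0 R else D2 R)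
          (restrict_db D q', restrict_db D (q - q')) R = D R"
        using db_outside[OF D, of R] cq_rels_split[OF sub] by (auto simp: restrict_db_def)
    qed
  qed
next
  show "\<forall>p\<in>matching_dbs n q' \<times> matching_dbs n (q - q').
     (restrict_db ((\<lambda>(D0, D2) R. if R \<in> cq_rels q' then D0 R else D2 R) p) q',
      restrict_db ((\<lambda>(D0, D2) R. if R \<in> cq_rels q' then D0 R else D2 R) p) (q - q')) = p"
  proof
    fix p assume p: "p \<in> matching_dbs n q' \<times> matching_dbs n (q - q')"
    obtain D0 D2 where pp: "p = (D0, D2)" "D0 \<in> matching_dbs n q'" "D2 \<in> matching_dbs n (q - q')"
      using p by auto
    have dis: "R \<notin> cq_rels q'" if Rr: "R \<in> cq_rels (q - q')" for R
    proof -
      obtain xs where "(R, xs) \<in> q - q'" using Rr by (auto simp: cq_rels_def)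
      then show ?thesis using rel_not_in_sub[OF sjf sub] by blast
    qed
    have "(\<lambda>R. if R \<in> cq_rels q' then (if R \<in> cq_rels q' then D0 R else D2 R) else {}) = D0"
      by (rule ext) (use db_outside[OF pp(2)] in auto)
    moreover have "(\<lambda>R. if R \<in> cq_rels (q - q') then (if R \<in> cq_rels q' then D0 R else D2 R) else {}) = D2"
      by (rule ext) (use db_outside[OF pp(3)] dis in auto)
    ultimately show "(restrict_db ((\<lambda>(D0, D2) R. if R \<in> cq_rels q' then D0 R else D2 R) p) q',
      restrict_db ((\<lambda>(D0, D2) R. if R \<in> cq_rels q' then D0 R else D2 R) p) (q - q')) = p"
      using pp(1) by (simp add: restrict_db_def)
  qed
next
  show "(\<lambda>D. (restrict_db D q', restrict_db D (q - q'))) ` matching_dbs n q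
      \<subseteq> matching_dbs n q' \<times> matching_dbs n (q - q')"
    using restrict_db_matching sub by blast
next
  show "(\<lambda>(D0, D2) R. if R \<in> cq_rels q' then D0 R else D2 R) `
      (matching_dbs n q' \<times> matching_dbs n (q - q')) \<subseteq> matching_dbs n q"
  proof clarify
    fix D0 D2 assume d: "D0 \<in> matching_dbs n q'" "D2 \<in> matching_dbs n (q - q')"
    show "(\<lambda>R. if R \<in> cq_rels q' then D0 R else D2 R) \<in> matching_dbs n q"
      unfolding matching_dbs_def
    proof (intro CollectI conjI ballI allI impI)
      fix a assume a: "a \<in> q"
      obtain R xs where a': "a = (R, xs)" by fastforce
      show "case a of (R, xs) \<Rightarrow> matching_rel n (length xs) (if R \<in> cq_rels q' then D0 R else D2 R)"
      proof (cases "(R, xs) \<in> q'")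
        case True
        then have "R \<in> cq_rels q'" by (force simp: cq_rels_def)
        then show ?thesis using d(1) True a' unfolding matching_dbs_def by auto
      next
        case False
        then have "R \<notin> cq_rels q'" using rel_not_in_sub[OF sjf sub, of R xs] a a' by auto
        then show ?thesis using d(2) False a a' unfolding matching_dbs_def by auto
      qed
    next
      fix R assume "R \<notin> cq_rels q"
      then show "(if R \<in> cq_rels q' then D0 R else D2 R) = {}"
        using cq_rels_split[OF sub] db_outside[OF d(2)] by auto
    qed
  qed
qed


definition Ex :: "('r,'v) cq \<Rightarrow> ('r,'v) cq \<Rightarrow> 'r db \<Rightarrow> ('v \<Rightarrow> nat) \<Rightarrow> ('v \<Rightarrow> nat) set" where
  "Ex q q' D \<alpha> = {\<gamma> \<in> cq_vars q \<rightarrow>\<^sub>E UNIV. restrict \<gamma> (cq_vars q') = \<alpha> \<and> (\<forall>(R, xs)\<in>q - q'. map \<gamma> xs \<in> D R)}"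

lemma map_restrict: "set xs \<subseteq> V \<Longrightarrow> map (restrict \<gamma> V) xs = map \<gamma> xs"
  by (induction xs) auto

lemma semijoin_decomp:
  assumes sjf: "self_join_free q" and sub: "q' \<subseteq> q" and D: "D \<in> matching_dbs n q"
    and Bs: "Bs \<subseteq> answers q' (restrict_db D q')"
  shows "semijoin (answers q D) (cq_vars q') Bs = (\<Union>\<alpha>\<in>Bs. Ex q q' (restrict_db D (q - q')) \<alpha>)"
proof
  show "semijoin (answers q D) (cq_vars q') Bs \<subseteq> (\<Union>\<alpha>\<in>Bs. Ex q q' (restrict_db D (q - q')) \<alpha>)"
  proof
    fix \<gamma> assume g: "\<gamma> \<in> semijoin (answers q D) (cq_vars q') Bs"
    then have g1: "\<gamma> \<in> cq_vars q \<rightarrow>\<^sub>E UNIV" "\<forall>(R, xs)\<in>q. map \<gamma> xs \<in> D R"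
      and g2: "restrict \<gamma> (cq_vars q') \<in> Bs"
      by (auto simp: semijoin_def answers_def)
    have "\<forall>(R, xs)\<in>q - q'. map \<gamma> xs \<in> restrict_db D (q - q') R"
    proof (clarify)
      fix R xs assume a: "(R, xs) \<in> q" "(R, xs) \<notin> q'"
      then have "R \<in> cq_rels (q - q')" by (force simp: cq_rels_def)
      then show "map \<gamma> xs \<in> restrict_db D (q - q') R" using g1(2) a by (auto simp: restrict_db_def)
    qed
    then have "\<gamma> \<in> Ex q q' (restrict_db D (q - q')) (restrict \<gamma> (cq_vars q'))"
      using g1 by (simp add: Ex_def)
    then show "\<gamma> \<in> (\<Union>\<alpha>\<in>Bs. Ex q q' (restrict_db D (q - q')) \<alpha>)" using g2 by blast
  qed
next
  show "(\<Union>\<alpha>\<in>Bs. Ex q q' (restrict_db D (q - q')) \<alpha>) \<subseteq> semijoin (answers q D) (cq_vars q') Bs"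
  proof clarify
    fix \<alpha> \<gamma> assume a: "\<alpha> \<in> Bs" and g: "\<gamma> \<in> Ex q q' (restrict_db D (q - q')) \<alpha>"
    then have g1: "\<gamma> \<in> cq_vars q \<rightarrow>\<^sub>E UNIV" "restrict \<gamma> (cq_vars q') = \<alpha>"
      "\<forall>(R, xs)\<in>q - q'. map \<gamma> xs \<in> restrict_db D (q - q') R"
      by (auto simp: Ex_def)
    have aa: "\<alpha> \<in> answers q' (restrict_db D q')" using a Bs by blast
    have "map \<gamma> xs \<in> D R" if rx: "(R, xs) \<in> q" for R xs
    proof (cases "(R, xs) \<in> q'")
      case True
      have sx: "set xs \<subseteq> cq_vars q'" using True by (force simp: cq_vars_def)
      have "R \<in> cq_rels q'" using True by (force simp: cq_rels_def)
      moreover have "map \<alpha> xs \<in> restrict_db D q' R" using aa True by (auto simp: answers_def)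
      ultimately have "map \<alpha> xs \<in> D R" by (simp add: restrict_db_def)
      moreover have "map \<gamma> xs = map \<alpha> xs" using map_restrict[OF sx, of \<gamma>] g1(2) by simp
      ultimately show ?thesis by metis
    next
      case False
      then have "R \<in> cq_rels (q - q')" using rx by (force simp: cq_rels_def)
      moreover have "map \<gamma> xs \<in> restrict_db D (q - q') R" using g1(3) rx False by blast
      ultimately show ?thesis by (simp add: restrict_db_def)
    qed
    then have "\<gamma> \<in> answers q D" using g1(1) by (auto simp: answers_def)
    then show "\<gamma> \<in> semijoin (answers q D) (cq_vars q') Bs" using g1(2) a by (simp add: semijoin_def)
  qed
qed

lemma finite_Ex:
  assumes fin: "finite q" and sub: "q' \<subseteq> q" and D2: "D2 \<in> matching_dbs n (q - q')"
  shows "finite (Ex q q' D2 \<alpha>)"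
proof -
  have "Ex q q' D2 \<alpha> \<subseteq> PiE (cq_vars q) (\<lambda>x. if x \<in> cq_vars q' then {\<alpha> x} else {1..n})"
  proof
    fix \<gamma> assume g: "\<gamma> \<in> Ex q q' D2 \<alpha>"
    then have g1: "\<gamma> \<in> cq_vars q \<rightarrow>\<^sub>E UNIV" "restrict \<gamma> (cq_vars q') = \<alpha>"
      "\<forall>(R, xs)\<in>q - q'. map \<gamma> xs \<in> D2 R"
      by (auto simp: Ex_def)
    have "\<gamma> x \<in> (if x \<in> cq_vars q' then {\<alpha> x} else {1..n})" if xq: "x \<in> cq_vars q" for x
    proof (cases "x \<in> cq_vars q'")
      case True then show ?thesis using g1(2) by auto
    next
      case False
      obtain R xs where R: "(R, xs) \<in> q" "x \<in> set xs" using xq unfolding in_cq_vars by blast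
      have "(R, xs) \<notin> q'" using R False by (force simp: cq_vars_def)
      then have "map \<gamma> xs \<in> D2 R" using g1(3) R(1) by auto
      then have "set (map \<gamma> xs) \<subseteq> {1..n}" using db_tuple[OF D2, of R xs] R(1) \<open>(R, xs) \<notin> q'\<close> by blast
      then show ?thesis using False R(2) by auto
    qed
    then show "\<gamma> \<in> PiE (cq_vars q) (\<lambda>x. if x \<in> cq_vars q' then {\<alpha> x} else {1..n})"
      using g1(1) by (auto simp: PiE_iff)
  qed
  then show ?thesis by (rule finite_subset) (intro finite_PiE finite_cq_vars fin, simp)
qed

lemma card_semijoin:
  assumes fin: "finite q" and sjf: "self_join_free q" and sub: "q' \<subseteq> q" and D: "D \<in> matching_dbs n q"
    and Bs: "Bs \<subseteq> answers q' (restrict_db D q')"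
  shows "card (semijoin (answers q D) (cq_vars q') Bs) = (\<Sum>\<alpha>\<in>Bs. card (Ex q q' (restrict_db D (q - q')) \<alpha>))"
proof -
  have D1: "restrict_db D q' \<in> matching_dbs n q'" using restrict_db_matching D sub by blast
  have D2: "restrict_db D (q - q') \<in> matching_dbs n (q - q')" using restrict_db_matching D by blast
  have fq': "finite q'" using fin sub finite_subset by blast
  have fB: "finite Bs" using finite_subset[OF Bs finite_answers[OF fq' D1]] .
  show ?thesis unfolding semijoin_decomp[OF sjf sub D Bs]
  proof (rule card_UN_disjoint[OF fB])
    show "\<forall>i\<in>Bs. finite (Ex q q' (restrict_db D (q - q')) i)" using finite_Ex[OF fin sub D2] by blast
    show "\<forall>i\<in>Bs. \<forall>j\<in>Bs. i \<noteq> j \<longrightarrow> Ex q q' (restrict_db D (q - q')) i \<inter> Ex q q' (restrict_db D (q - q')) j = {}"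
      by (auto simp: Ex_def)
  qed
qed

lemma answers_semijoin:
  assumes sub: "q' \<subseteq> q"
  shows "semijoin (answers q D) (cq_vars q') (answers q' (restrict_db D q')) = answers q D"
proof -
  have "restrict \<gamma> (cq_vars q') \<in> answers q' (restrict_db D q')" if g: "\<gamma> \<in> answers q D" for \<gamma>
  proof -
    have "map (restrict \<gamma> (cq_vars q')) xs \<in> restrict_db D q' R" if rx: "(R, xs) \<in> q'" for R xs
    proof -
      have sx: "set xs \<subseteq> cq_vars q'" using rx by (force simp: cq_vars_def)
      have "R \<in> cq_rels q'" using rx by (force simp: cq_rels_def)
      moreover have "map \<gamma> xs \<in> D R" using g rx sub by (auto simp: answers_def)
      ultimately show ?thesis by (simp add: map_restrict[OF sx] restrict_db_def)
    qed
    then show ?thesis by (auto simp: answers_def)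
  qed
  then show ?thesis by (auto simp: semijoin_def)
qed


definition gsw :: "'v set \<Rightarrow> ('v \<Rightarrow> nat) \<Rightarrow> ('v \<Rightarrow> nat) \<Rightarrow> 'v \<Rightarrow> nat \<Rightarrow> nat" where
  "gsw V a1 a2 x = (if x \<in> V then sw (a1 x) (a2 x) else id)"

definition Gm :: "'v set \<Rightarrow> ('v \<Rightarrow> nat) \<Rightarrow> ('v \<Rightarrow> nat) \<Rightarrow> ('v \<Rightarrow> nat) \<Rightarrow> ('v \<Rightarrow> nat)" where
  "Gm V a1 a2 \<gamma> = (\<lambda>x. gsw V a1 a2 x (\<gamma> x))"

definition Phi :: "('r,'v) cq \<Rightarrow> 'v set \<Rightarrow> ('v \<Rightarrow> nat) \<Rightarrow> ('v \<Rightarrow> nat) \<Rightarrow> 'r db \<Rightarrow> 'r db" where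
  "Phi q V a1 a2 D = (\<lambda>R. psi (\<lambda>j. gsw V a1 a2 ((THE xs. (R, xs) \<in> q) ! j)) ` D R)"

lemma gsw_invol[simp]: "gsw V a1 a2 x (gsw V a1 a2 x v) = v"
  by (simp add: gsw_def)

lemma gsw_sym: "gsw V a1 a2 = gsw V a2 a1"
  by (auto simp: gsw_def fun_eq_iff sw_sym)

lemma Gm_invol[simp]: "Gm V a1 a2 (Gm V a1 a2 \<gamma>) = \<gamma>"
  by (simp add: Gm_def)

lemma Gm_sym: "Gm V a1 a2 = Gm V a2 a1"
  by (simp add: Gm_def gsw_sym fun_eq_iff)

lemma Phi_sym: "Phi q V a1 a2 = Phi q V a2 a1"
  by (simp add: Phi_def gsw_sym fun_eq_iff)

lemma Phi_invol[simp]: "Phi q V a1 a2 (Phi q V a1 a2 D) = D"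
proof
  fix R
  have "\<And>t. psi (\<lambda>j. gsw V a1 a2 ((THE xs. (R, xs) \<in> q) ! j))
           (psi (\<lambda>j. gsw V a1 a2 ((THE xs. (R, xs) \<in> q) ! j)) t) = t"
    by (rule psi_invol) simp
  then show "Phi q V a1 a2 (Phi q V a1 a2 D) R = D R"
    by (simp add: Phi_def image_image)
qed

lemma Phi_matching:
  assumes sjf: "self_join_free q" and D: "D \<in> matching_dbs n (q - q')"
    and a1: "\<forall>x\<in>V. a1 x \<in> {1..n}" and a2: "\<forall>x\<in>V. a2 x \<in> {1..n}"
  shows "Phi q V a1 a2 D \<in> matching_dbs n (q - q')"
  unfolding matching_dbs_def
proof (intro CollectI conjI ballI allI impI)
  fix a assume a: "a \<in> q - q'"
  obtain R xs where a': "a = (R, xs)" by fastforce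
  have th: "(THE ys. (R, ys) \<in> q) = xs" using the_atom[OF sjf] a a' by blast
  have m: "matching_rel n (length xs) (D R)" using D a a' unfolding matching_dbs_def by auto
  have "matching_rel n (length xs) (psi (\<lambda>j. gsw V a1 a2 (xs ! j)) ` D R)"
  proof (rule matching_rel_psi[OF m])
    fix j v assume "j < length xs" "v \<in> {1..n}"
    then show "gsw V a1 a2 (xs ! j) v \<in> {1..n}"
      using a1 a2 sw_range[of "a1 (xs!j)" "{1..n}" "a2 (xs!j)" v] by (auto simp: gsw_def)
  qed simp
  then show "case a of (R, xs) \<Rightarrow> matching_rel n (length xs) (Phi q V a1 a2 D R)"
    using a' th by (simp add: Phi_def)
next
  fix R assume "R \<notin> cq_rels (q - q')"
  then show "Phi q V a1 a2 D R = {}" using db_outside[OF D] by (simp add: Phi_def)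
qed

lemma Ex_map:
  assumes sjf: "self_join_free q" and sub: "q' \<subseteq> q"
    and a2: "a2 \<in> cq_vars q' \<rightarrow>\<^sub>E UNIV"
    and g: "\<gamma> \<in> Ex q q' D a1"
  shows "Gm (cq_vars q') a1 a2 \<gamma> \<in> Ex q q' (Phi q (cq_vars q') a1 a2 D) a2"
proof -
  let ?V = "cq_vars q'"
  have g1: "\<gamma> \<in> cq_vars q \<rightarrow>\<^sub>E UNIV" "restrict \<gamma> ?V = a1" "\<forall>(R, xs)\<in>q - q'. map \<gamma> xs \<in> D R"
    using g by (auto simp: Ex_def)
  have VV: "?V \<subseteq> cq_vars q" using cq_vars_mono[OF sub] .
  have "Gm ?V a1 a2 \<gamma> \<in> cq_vars q \<rightarrow>\<^sub>E UNIV"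
    using g1(1) VV by (auto simp: Gm_def gsw_def PiE_iff extensional_def)
  moreover have "restrict (Gm ?V a1 a2 \<gamma>) ?V = a2"
  proof
    fix x show "restrict (Gm ?V a1 a2 \<gamma>) ?V x = a2 x"
    proof (cases "x \<in> ?V")
      case True
      then have "\<gamma> x = a1 x" using g1(2) by (metis restrict_apply')
      then show ?thesis using True by (simp add: Gm_def gsw_def sw_def)
    next
      case False then show ?thesis using a2 by (auto simp: PiE_iff extensional_def)
    qed
  qed
  moreover have "\<forall>(R, xs)\<in>q - q'. map (Gm ?V a1 a2 \<gamma>) xs \<in> Phi q ?V a1 a2 D R"
  proof clarify
    fix R xs assume r: "(R, xs) \<in> q" "(R, xs) \<notin> q'"
    have th: "(THE ys. (R, ys) \<in> q) = xs" using the_atom[OF sjf r(1)] .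
    have "map \<gamma> xs \<in> D R" using g1(3) r by blast
    moreover have "map (Gm ?V a1 a2 \<gamma>) xs = psi (\<lambda>j. gsw ?V a1 a2 (xs ! j)) (map \<gamma> xs)"
      by (simp add: psi_map Gm_def)
    ultimately show "map (Gm ?V a1 a2 \<gamma>) xs \<in> Phi q ?V a1 a2 D R"
      using th by (simp add: Phi_def)
  qed
  ultimately show ?thesis by (simp add: Ex_def)
qed

lemma card_Ex_eq:
  assumes sjf: "self_join_free q" and sub: "q' \<subseteq> q"
    and a1: "a1 \<in> cq_vars q' \<rightarrow>\<^sub>E UNIV" and a2: "a2 \<in> cq_vars q' \<rightarrow>\<^sub>E UNIV"
  shows "card (Ex q q' D a1) = card (Ex q q' (Phi q (cq_vars q') a1 a2 D) a2)"
proof (rule bij_betw_same_card)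
  let ?V = "cq_vars q'"
  show "bij_betw (Gm ?V a1 a2) (Ex q q' D a1) (Ex q q' (Phi q ?V a1 a2 D) a2)"
  proof (rule bij_betw_byWitness[where f' = "Gm ?V a1 a2"])
    show "Gm ?V a1 a2 ` Ex q q' D a1 \<subseteq> Ex q q' (Phi q ?V a1 a2 D) a2"
      using Ex_map[OF sjf sub a2] by blast
    have "Gm ?V a2 a1 \<gamma> \<in> Ex q q' (Phi q ?V a2 a1 (Phi q ?V a1 a2 D)) a1"
      if "\<gamma> \<in> Ex q q' (Phi q ?V a1 a2 D) a2" for \<gamma>
      using Ex_map[OF sjf sub a1 that] .
    then show "Gm ?V a1 a2 ` Ex q q' (Phi q ?V a1 a2 D) a2 \<subseteq> Ex q q' D a1"
      by (auto simp: Phi_sym[of q ?V a2 a1] Gm_sym[of ?V a2 a1])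
  qed simp_all
qed

lemma T_eq:
  assumes sjf: "self_join_free q" and sub: "q' \<subseteq> q"
    and a1: "a1 \<in> cq_vars q' \<rightarrow>\<^sub>E {1..n}" and a2: "a2 \<in> cq_vars q' \<rightarrow>\<^sub>E {1..n}"
  shows "(\<Sum>D\<in>matching_dbs n (q - q'). card (Ex q q' D a1))
       = (\<Sum>D\<in>matching_dbs n (q - q'). card (Ex q q' D a2))"
proof -
  let ?V = "cq_vars q'" and ?M = "matching_dbs n (q - q')"
  have a1': "a1 \<in> ?V \<rightarrow>\<^sub>E UNIV" and a2': "a2 \<in> ?V \<rightarrow>\<^sub>E UNIV" using a1 a2 by (auto simp: PiE_iff)
  have bij: "bij_betw (Phi q ?V a1 a2) ?M ?M"
    by (rule bij_betw_byWitness[where f' = "Phi q ?V a1 a2"])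
       (use Phi_matching[OF sjf, of _ n q' ?V a1 a2] a1 a2 in \<open>auto simp: PiE_iff\<close>)
  have "(\<Sum>D\<in>?M. card (Ex q q' D a1)) = (\<Sum>D\<in>?M. card (Ex q q' (Phi q ?V a1 a2 D) a2))"
    using card_Ex_eq[OF sjf sub a1' a2'] by simp
  also have "\<dots> = (\<Sum>D\<in>?M. card (Ex q q' D a2))"
    by (rule sum.reindex_bij_betw[OF bij])
  finally show ?thesis .
qed


lemma key:
  assumes fin: "finite q" and sjf: "self_join_free q" and sub: "q' \<subseteq> q"
    and Bs: "\<forall>D0\<in>matching_dbs n q'. B' D0 \<subseteq> answers q' D0"
  shows "card (matching_dbs n (q - q')) *
           (\<Sum>D\<in>matching_dbs n q. card (semijoin (answers q D) (cq_vars q') (B' (restrict_db D q'))))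
       = (\<Sum>D2\<in>matching_dbs n (q - q'). card (Ex q q' D2 (SOME \<alpha>. \<alpha> \<in> cq_vars q' \<rightarrow>\<^sub>E {1..n}))) *
           (\<Sum>D\<in>matching_dbs n q. card (B' (restrict_db D q')))"
proof -
  let ?M = "matching_dbs n q" and ?M1 = "matching_dbs n q'" and ?M2 = "matching_dbs n (q - q')"
  let ?V = "cq_vars q'"
  let ?K = "\<Sum>D2\<in>?M2. card (Ex q q' D2 (SOME \<alpha>. \<alpha> \<in> ?V \<rightarrow>\<^sub>E {1..n}))"
  define h where "h = (\<lambda>p. \<Sum>\<alpha>\<in>B' (fst p). card (Ex q q' (snd p) \<alpha>))"
  define f where "f = (\<lambda>D. (restrict_db D q', restrict_db D (q - q')))"
  have bij: "bij_betw f ?M (?M1 \<times> ?M2)" unfolding f_def by (rule split_bij[OF sjf sub])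
  have fq': "finite q'" using fin sub finite_subset by blast
  have fM2: "finite ?M2" by (rule finite_matching_dbs) (use fin in simp)
  have fM1: "finite ?M1" by (rule finite_matching_dbs[OF fq'])
  have "(\<Sum>D\<in>?M. card (semijoin (answers q D) ?V (B' (restrict_db D q')))) = (\<Sum>D\<in>?M. h (f D))"
  proof (rule sum.cong[OF refl])
    fix D assume D: "D \<in> ?M"
    have "restrict_db D q' \<in> ?M1" using restrict_db_matching[OF D sub] .
    then have "B' (restrict_db D q') \<subseteq> answers q' (restrict_db D q')" using Bs by blast
    then show "card (semijoin (answers q D) ?V (B' (restrict_db D q'))) = h (f D)"
      using card_semijoin[OF fin sjf sub D] by (simp add: h_def f_def)
  qed
  also have "\<dots> = (\<Sum>p\<in>?M1 \<times> ?M2. h p)" by (rule sum.reindex_bij_betw[OF bij])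
  also have "\<dots> = (\<Sum>D0\<in>?M1. \<Sum>D2\<in>?M2. h (D0, D2))"
    unfolding sum.cartesian_product by (simp add: case_prod_unfold)
  also have "\<dots> = (\<Sum>D0\<in>?M1. \<Sum>\<alpha>\<in>B' D0. \<Sum>D2\<in>?M2. card (Ex q q' D2 \<alpha>))"
    by (simp add: h_def sum.swap[of _ ?M2])
  also have "\<dots> = (\<Sum>D0\<in>?M1. \<Sum>\<alpha>\<in>B' D0. ?K)"
  proof (rule sum.cong[OF refl], rule sum.cong[OF refl])
    fix D0 \<alpha> assume D0: "D0 \<in> ?M1" and a: "\<alpha> \<in> B' D0"
    have aa: "\<alpha> \<in> ?V \<rightarrow>\<^sub>E {1..n}" using answers_range[OF D0] Bs D0 a by blast
    have s: "(SOME \<alpha>. \<alpha> \<in> ?V \<rightarrow>\<^sub>E {1..n}) \<in> ?V \<rightarrow>\<^sub>E {1..n}" using aa by (rule someI[where P="\<lambda>b. b \<in> ?V \<rightarrow>\<^sub>E {1..n}"])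
    show "(\<Sum>D2\<in>?M2. card (Ex q q' D2 \<alpha>)) = ?K" by (rule T_eq[OF sjf sub aa s])
  qed
  finally have L: "(\<Sum>D\<in>?M. card (semijoin (answers q D) ?V (B' (restrict_db D q'))))
      = (\<Sum>D0\<in>?M1. card (B' D0) * ?K)" by simp
  have "(\<Sum>D\<in>?M. card (B' (restrict_db D q'))) = (\<Sum>D\<in>?M. (\<lambda>p. card (B' (fst p))) (f D))"
    by (simp add: f_def)
  also have "\<dots> = (\<Sum>p\<in>?M1 \<times> ?M2. card (B' (fst p)))" by (rule sum.reindex_bij_betw[OF bij])
  also have "\<dots> = (\<Sum>D0\<in>?M1. \<Sum>D2\<in>?M2. card (B' (fst (D0, D2))))"
    unfolding sum.cartesian_product by (simp add: case_prod_unfold)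
  also have "\<dots> = (\<Sum>D0\<in>?M1. card ?M2 * card (B' D0))" by simp
  finally have R: "(\<Sum>D\<in>?M. card (B' (restrict_db D q'))) = (\<Sum>D0\<in>?M1. card ?M2 * card (B' D0))" .
  have gen: "\<And>K :: nat. card ?M2 * (\<Sum>D0\<in>?M1. card (B' D0) * K) = K * (\<Sum>D0\<in>?M1. card ?M2 * card (B' D0))"
    by (simp add: sum_distrib_left mult_ac)
  show ?thesis unfolding L R by (rule gen)
qed

theorem lemma11:
  fixes q q' :: "('r, 'v) cq" and n :: nat and \<gamma> :: real
    and B :: "'r db \<Rightarrow> ('v \<Rightarrow> nat) set"
  assumes "finite q" and "self_join_free q" and "q' \<subseteq> q"
    and "matching_dbs n q \<noteq> {}"
    and "\<forall>D'\<in>matching_dbs n q'. B D' \<subseteq> answers q' D'"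
    and "measure_pmf.expectation (pmf_of_set (matching_dbs n q))
           (\<lambda>I. real (card (B (restrict_db I q'))))
         \<le> \<gamma> * measure_pmf.expectation (pmf_of_set (matching_dbs n q))
           (\<lambda>I. real (card (answers q' (restrict_db I q'))))"
  shows "measure_pmf.expectation (pmf_of_set (matching_dbs n q))
           (\<lambda>I. real (card (semijoin (answers q I) (cq_vars q') (B (restrict_db I q')))))
         \<le> \<gamma> * measure_pmf.expectation (pmf_of_set (matching_dbs n q))
           (\<lambda>I. real (card (answers q I)))"
proof -
  let ?M = "matching_dbs n q" and ?M2 = "matching_dbs n (q - q')"
  let ?K = "\<Sum>D2\<in>?M2. card (Ex q q' D2 (SOME \<alpha>. \<alpha> \<in> cq_vars q' \<rightarrow>\<^sub>E {1..n}))"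
  have fM: "finite ?M" by (rule finite_matching_dbs[OF assms(1)])
  have ne: "?M \<noteq> {}" by (rule assms(4))
  have fM2: "finite ?M2" by (rule finite_matching_dbs) (use assms(1) in simp)
  have "?M2 \<noteq> {}"
  proof -
    obtain D where "D \<in> ?M" using ne by blast
    then show ?thesis using restrict_db_matching[of D n q "q - q'"] by blast
  qed
  then have c2: "card ?M2 > 0" using fM2 by (simp add: card_gt_0_iff)
  have m: "card ?M > 0" using fM ne by (simp add: card_gt_0_iff)
  define SB where "SB = (\<Sum>D\<in>?M. card (semijoin (answers q D) (cq_vars q') (B (restrict_db D q'))))"
  define SA where "SA = (\<Sum>D\<in>?M. card (answers q D))"
  define TB where "TB = (\<Sum>D\<in>?M. card (B (restrict_db D q')))"
  define TA where "TA = (\<Sum>D\<in>?M. card (answers q' (restrict_db D q')))"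
  have eB: "card ?M2 * SB = ?K * TB" unfolding SB_def TB_def
    by (rule key[OF assms(1,2,3,5)])
  have "card ?M2 * (\<Sum>D\<in>?M. card (semijoin (answers q D) (cq_vars q') (answers q' (restrict_db D q'))))
        = ?K * TA" unfolding TA_def
    by (rule key[OF assms(1,2,3)]) simp
  then have eA: "card ?M2 * SA = ?K * TA" unfolding SA_def using answers_semijoin[OF assms(3)] by simp
  define K where "K = ?K"
  note eB = eB[folded K_def] and eA = eA[folded K_def]
  have E: "measure_pmf.expectation (pmf_of_set ?M) f = (\<Sum>D\<in>?M. f D) / card ?M" for f :: "_ \<Rightarrow> real"
    by (rule integral_pmf_of_set[OF ne fM])
  have h: "real TB / card ?M \<le> \<gamma> * (real TA / card ?M)"
    using assms(6) unfolding E TB_def TA_def by simp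
  then have h': "real TB \<le> \<gamma> * real TA" using m by (simp add: field_simps)
  have rB: "real SB = real K * real TB / real (card ?M2)" using eB c2
    by (simp add: field_simps flip: of_nat_mult)
  have rA: "real SA = real K * real TA / real (card ?M2)" using eA c2
    by (simp add: field_simps flip: of_nat_mult)
  have "real SB \<le> \<gamma> * real SA"
  proof -
    have "real K * real TB \<le> real K * (\<gamma> * real TA)" using h' by (simp add: mult_left_mono)
    then have "real K * real TB / real (card ?M2) \<le> \<gamma> * (real K * real TA) / real (card ?M2)"
      using c2 by (simp add: divide_right_mono mult_ac)
    then show ?thesis unfolding rB rA by simp
  qed
  then show ?thesis unfolding E SB_def SA_def using m by (simp add: divide_right_mono)
qed

end
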